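(* Let $N$ be a positive even integer and let $\sigma\colon\{0,1\}^*\to\{0,1,\#\}^*$ be the substitution defined by $\sigma(0)=\#0^{N-1}$ and $\sigma(1)=\#1^{N-1}$. Let $\mathbf{w}$ be an infinite binary word. If an abelian power $u_0\cdots u_{e-1}$ with $e\ge N$ occurs in $\sigma(\mathbf{w})$, then $\mathbf{w}$ contains an abelian power $v_0\cdots v_{e-1}$ with $|v_0|=|u_0|/N$.
   Context: Two finite words $u,v$ are abelian equivalent, written $u\sim v$, if they are permutations of each other. An abelian power of exponent $e$ (a positive integer) and period $m$ is a word of the form $u_0u_1\cdots u_{e-1}$ where $u_0,\dots,u_{e-1}$ are nonempty, pairwise abelian equivalent, and $m=|u_0|$. The image $\sigma(\mathbf{w})$ of an infinite word is obtained by applying $\sigma$ letter by letter. *)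

theory Defs
  imports Main "HOL-Library.Multiset"
begin

text \<open>The binary alphabet {0,1} is rendered as bool (False = 0, True = 1);
  the alphabet {0,1,#} is rendered as bool option (None = #, Some b = b).\<close>

definition abelian_equiv :: "'a list \<Rightarrow> 'a list \<Rightarrow> bool" where
  "abelian_equiv u v \<longleftrightarrow> mset u = mset v"

text \<open>The list us = [u_0,...,u_(e-1)] of blocks is an abelian power of
  exponent e and period m; the word itself is concat us.\<close>
definition abelian_power :: "'a list list \<Rightarrow> nat \<Rightarrow> nat \<Rightarrow> bool" where
  "abelian_power us e m \<longleftrightarrow>
     e > 0 \<and> length us = e \<and> (\<forall>u\<in>set us. u \<noteq> []) \<and>
     (\<forall>u\<in>set us. \<forall>v\<in>set us. abelian_equiv u v) \<and> m = length (hd us)"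

definition occurs_in :: "'a list \<Rightarrow> (nat \<Rightarrow> 'a) \<Rightarrow> bool" where
  "occurs_in u x \<longleftrightarrow> (\<exists>i. u = map x [i..<i + length u])"

text \<open>Image of the infinite binary word w under sigma(0) = # 0^(N-1),
  sigma(1) = # 1^(N-1).\<close>
definition sigma_img :: "nat \<Rightarrow> (nat \<Rightarrow> bool) \<Rightarrow> nat \<Rightarrow> bool option" where
  "sigma_img N w i = (if i mod N = 0 then None else Some (w (i div N)))"

end

theory Submission
  imports Defs
begin

definition cnt :: "(nat \<Rightarrow> 'a) \<Rightarrow> 'a \<Rightarrow> nat \<Rightarrow> nat" where
  "cnt f x n = length (filter (\<lambda>j. f j = x) [0..<n])"

lemma cnt_Suc: "cnt f x (Suc n) = cnt f x n + (if f n = x then 1 else 0)"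
  by (simp add: cnt_def)

lemma cnt_mono: "a \<le> b \<Longrightarrow> cnt f x a \<le> cnt f x b"
  by (induction b) (auto simp: cnt_Suc le_Suc_eq)

lemma count_window: "a \<le> b \<Longrightarrow> count (mset (map f [a..<b])) x = cnt f x b - cnt f x a"
proof (induction b)
  case 0 then show ?case by simp
next
  case (Suc b)
  show ?case
  proof (cases "a = Suc b")
    case True then show ?thesis by simp
  next
    case False
    then have "a \<le> b" using Suc by simp
    then show ?thesis using Suc cnt_mono[of a b f x] by (auto simp: cnt_Suc)
  qed
qed

lemma cntG: "N > 0 \<Longrightarrow> cnt (sigma_img N w) None x = (x + N - 1) div N"
proof (induction x)
  case 0 then show ?case by (simp add: cnt_def)
next
  case (Suc x)
  have "(Suc x + N - 1) div N = (x + N - 1) div N + (if x mod N = 0 then 1 else 0)"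
  proof -
    have e: "Suc x + N - 1 = Suc (x + N - 1)" using Suc by simp
    have e2: "Suc (x + N - 1) = x + N" using Suc.prems by simp
    have "Suc (x + N - 1) mod N = 0 \<longleftrightarrow> x mod N = 0"
      unfolding e2 by simp
    then show ?thesis unfolding e div_Suc by simp
  qed
  then show ?case using Suc by (simp add: cnt_Suc sigma_img_def)
qed

lemma cntT_inner: assumes "N > 0" "t \<le> N"
  and base: "cnt (sigma_img N w) (Some True) (k * N) = (N - 1) * cnt w True k"
  shows "cnt (sigma_img N w) (Some True) (k * N + t) =
     (N - 1) * cnt w True k + (t - 1) * (if w k then 1 else 0)"
  using assms(2)
proof (induction t)
  case 0 then show ?case using base by simp
next
  case (Suc t)
  have tl: "t < N" using Suc.prems by simp
  have m1: "(k * N + t) mod N = t"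
  proof -
    have "(k * N + t) mod N = (t + k * N) mod N" by (simp only: add.commute)
    also have "\<dots> = t mod N" by simp
    also have "\<dots> = t" using tl by simp
    finally show ?thesis .
  qed
  have m2: "(k * N + t) div N = k"
    using tl assms(1) by simp
  have sv: "sigma_img N w (k * N + t) = (if t = 0 then None else Some (w k))"
    unfolding sigma_img_def m1 m2 by simp
  have st: "cnt (sigma_img N w) (Some True) (k * N + Suc t) = cnt (sigma_img N w) (Some True) (k * N + t)
     + (if sigma_img N w (k * N + t) = Some True then 1 else 0)"
    by (metis add_Suc_right cnt_Suc)
  have IH: "cnt (sigma_img N w) (Some True) (k * N + t) =
     (N - 1) * cnt w True k + (t - 1) * (if w k then 1 else 0)" using Suc by simp
  show ?case unfolding st IH sv by (cases t) auto
qed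

lemma cntT_base: assumes "N > 0"
  shows "cnt (sigma_img N w) (Some True) (k * N) = (N - 1) * cnt w True k"
proof (induction k)
  case 0 then show ?case by (simp add: cnt_def)
next
  case (Suc k)
  have "cnt (sigma_img N w) (Some True) (k * N + N) =
     (N - 1) * cnt w True k + (N - 1) * (if w k then 1 else 0)"
    using cntT_inner[OF assms order_refl Suc] by simp
  moreover have "Suc k * N = k * N + N" by simp
  ultimately show ?case by (simp add: cnt_Suc algebra_simps)
qed

lemma cntT: assumes "N > 0" "t \<le> N"
  shows "cnt (sigma_img N w) (Some True) (k * N + t) =
     (N - 1) * cnt w True k + (t - 1) * (if w k then 1 else 0)"
  using cntT_inner[OF assms cntT_base[OF assms(1)]] .

lemma blocks:
  "(\<forall>u\<in>set us. length u = m) \<Longrightarrow> concat us = map f [P..<P + length us * m] \<Longrightarrow>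
   i < length us \<Longrightarrow> us ! i = map f [P + i * m..<P + i * m + m]"
proof (induction us arbitrary: P i)
  case Nil then show ?case by simp
next
  case (Cons u us)
  have lu: "length u = m" using Cons.prems by simp
  have "[P..<P + length (u # us) * m] = [P..<P + m] @ [P + m..<P + m + length us * m]"
  proof -
    have "[P..<P + m + length us * m] = [P..<P + m] @ [P + m..<P + m + length us * m]"
      by (rule upt_add_eq_append) simp
    then show ?thesis by (simp add: add.assoc)
  qed
  then have "u @ concat us = map f [P..<P + m] @ map f [P + m..<P + m + length us * m]"
    using Cons.prems(2) by simp
  then have hu: "u = map f [P..<P + m]" and hr: "concat us = map f [P + m..<P + m + length us * m]"
    using lu by (simp_all add: append_eq_append_conv)
  show ?case
  proof (cases i)
    case 0 then show ?thesis using hu by simp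
  next
    case (Suc j)
    have "us ! j = map f [P + m + j * m..<P + m + j * m + m]"
      using Cons.IH[OF _ hr] Cons.prems Suc by simp
    then show ?thesis using Suc by (simp add: algebra_simps)
  qed
qed

lemma nodiv:
  fixes n s k c :: int
  assumes "odd n" "0 < s" "s < n" "n * k = s * c" "c \<in> {1, -1, 2, -2}"
  shows False
proof -
  have n0: "n > 0" using assms by simp
  consider "k \<ge> 2" | "k \<le> -2" | "k = 1" | "k = -1" | "k = 0" by linarith
  then show False
  proof cases
    case 1
    then have "n * k \<ge> n * 2" using n0 by (simp add: mult_left_mono)
    then show ?thesis using assms by auto
  next
    case 2
    then have "n * k \<le> n * (-2)" using mult_left_mono[of k "-2" n] n0 by linarith
    then show ?thesis using assms by auto
  qed (use assms in auto)
qed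

lemma intlem:
  fixes A X :: "nat \<Rightarrow> int" and C :: int
  assumes "even N" "s < N" "2 \<le> e" "\<forall>j. X j = 0 \<or> X j = 1"
    and E: "\<forall>i<e. int (N - 1) * A i + int (s - 1) * (X (Suc i) - X i) = C"
  shows "\<forall>i<e. A i = A 0"
proof (cases "s \<le> 1")
  case True
  then have "\<forall>i<e. int (N - 1) * A i = C" using E by simp
  moreover have "N - 1 > 0" using assms(1,2) by presburger
  ultimately show ?thesis using assms(3)
  proof (intro allI impI)
    fix i assume "\<forall>i<e. int (N - 1) * A i = C" "N - 1 > 0" "i < e"
    moreover have "0 < e" using assms(3) by simp
    ultimately have "int (N - 1) * A i = int (N - 1) * A 0" by simp
    then show "A i = A 0" using \<open>N - 1 > 0\<close> by simp
  qed
next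
  case False
  have pair: "X i = X (Suc i) \<and> X (Suc i) = X (Suc (Suc i))" if "Suc i < e" for i
  proof (rule ccontr)
    assume nq: "\<not> ?thesis"
    have e1: "int (N - 1) * A i + int (s - 1) * (X (Suc i) - X i) = C" using E that by simp
    have e2: "int (N - 1) * A (Suc i) + int (s - 1) * (X (Suc (Suc i)) - X (Suc i)) = C" using E that by simp
    have "int (N - 1) * (A i - A (Suc i)) = int (s - 1) * (X (Suc (Suc i)) - 2 * X (Suc i) + X i)"
      using e1 e2 by (simp add: algebra_simps)
    moreover have "X (Suc (Suc i)) - 2 * X (Suc i) + X i \<in> {1, -1, 2, -2}"
      using nq assms(4)[rule_format, of i] assms(4)[rule_format, of "Suc i"] assms(4)[rule_format, of "Suc (Suc i)"]
      by auto
    moreover have "odd (int (N - 1))" using assms(1) False assms(2) by auto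
    moreover have "0 < int (s - 1)" "int (s - 1) < int (N - 1)" using False assms(2) by auto
    ultimately show False using nodiv by blast
  qed
  have X: "X (Suc i) = X i" if "i < e" for i
  proof (cases "Suc i < e")
    case True then show ?thesis using pair by simp
  next
    case f: False
    have "i \<noteq> 0" using that f assms(3) by linarith
    then obtain j where j: "i = Suc j" using not0_implies_Suc by blast
    then have "i = Suc j" "Suc j < e" using that by simp_all
    then show ?thesis using pair[of j] by simp
  qed
  have "\<forall>i<e. int (N - 1) * A i = C" using E X by simp
  moreover have "N - 1 > 0" using assms False by auto
  ultimately show ?thesis using assms(3)
  proof (intro allI impI)
    fix i assume "\<forall>i<e. int (N - 1) * A i = C" "N - 1 > 0" "i < e"
    moreover have "0 < e" using assms(3) by simp
    ultimately have "int (N - 1) * A i = int (N - 1) * A 0" by simp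
    then show "A i = A 0" using \<open>N - 1 > 0\<close> by simp
  qed
qed

lemma count_False: "count (mset xs) False = length xs - count (mset xs) True"
proof -
  have "count (mset xs) True + count (mset xs) False = length xs" by (induction xs) auto
  then show ?thesis by simp
qed

lemma bool_mset:
  fixes xs ys :: "bool list"
  assumes "length xs = length ys" "count (mset xs) True = count (mset ys) True"
  shows "mset xs = mset ys"
proof (rule multiset_eqI)
  fix x show "count (mset xs) x = count (mset ys) x"
    using assms count_False[of xs] count_False[of ys] by (cases x) auto
qed

lemma length_concat_const: "(\<forall>u\<in>set us. length u = m) \<Longrightarrow> length (concat us) = length us * m"
  by (induction us) auto

lemma concat_windows:
  "concat (map (\<lambda>i. map f [a + i * q..<a + i * q + q]) [0..<n]) = map f [a..<a + n * q]"
proof (induction n)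
  case 0 then show ?case by simp
next
  case (Suc n)
  have "[a..<a + n * q + q] = [a..<a + n * q] @ [a + n * q..<a + n * q + q]"
    by (rule upt_add_eq_append) simp
  then have eq: "map f [a..<a + n * q] @ map f [a + n * q..<a + n * q + q] = map f [a..<a + n * q + q]"
    by simp
  have "concat (map (\<lambda>i. map f [a + i * q..<a + i * q + q]) [0..<Suc n])
     = concat (map (\<lambda>i. map f [a + i * q..<a + i * q + q]) [0..<n]) @ map f [a + n * q..<a + n * q + q]"
    by simp
  also have "\<dots> = map f [a..<a + n * q] @ map f [a + n * q..<a + n * q + q]" using Suc by simp
  also have "\<dots> = map f [a..<a + n * q + q]" by (rule eq)
  also have "a + n * q + q = a + Suc n * q" by simp
  finally show ?case .
qed

theorem lemma3:
  fixes N e m :: nat and w :: "nat \<Rightarrow> bool" and us :: "bool option list list"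
  assumes "N > 0" and "even N"
    and "abelian_power us e m" and "e \<ge> N"
    and "occurs_in (concat us) (sigma_img N w)"
  shows "\<exists>vs. abelian_power vs e (m div N) \<and> N * (m div N) = m \<and> occurs_in (concat vs) w"
proof -
  define f where "f = sigma_img N w"
  have e0: "e > 0" and le: "length us = e" and ne: "\<forall>u\<in>set us. u \<noteq> []"
    and eqv: "\<forall>u\<in>set us. \<forall>v\<in>set us. mset u = mset v" and mh: "m = length (hd us)"
    using assms(3) unfolding abelian_power_def abelian_equiv_def by blast+
  have us0: "us ! 0 \<in> set us" using e0 le by simp
  have hd0: "hd us = us ! 0" using e0 le by (cases us) auto
  have lens: "\<forall>u\<in>set us. length u = m"
  proof
    fix u assume "u \<in> set us"
    then have "mset u = mset (us ! 0)" using eqv us0 by blast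
    then have "size (mset u) = size (mset (us ! 0))" by simp
    then show "length u = m" using mh hd0 by simp
  qed
  have m0: "m > 0" using ne us0 lens by auto
  have N2: "N \<ge> 2" using assms(1,2) by presburger
  have e2: "e \<ge> 2" using N2 assms(4) by simp
  obtain P where P: "concat us = map f [P..<P + length (concat us)]"
    using assms(5) unfolding occurs_in_def f_def by blast
  have lc: "length (concat us) = e * m" using length_concat_const[OF lens] le by simp
  have blk: "us ! i = map f [P + i * m..<P + i * m + m]" if "i < e" for i
    using blocks[OF lens, of f P i] P lc le that by simp
  have cnteq: "count (mset (us ! i)) x = count (mset (us ! 0)) x" if "i < e" for i x
  proof -
    have "us ! i \<in> set us" using that le by simp
    then have "mset (us ! i) = mset (us ! 0)" using eqv us0 by blast
    then show ?thesis by simp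
  qed
  define h where "h = count (mset (us ! 0)) None"
  define G where "G = cnt f None"
  have Gw: "G (P + i * m + m) = G (P + i * m) + h" if "i < e" for i
  proof -
    have "count (mset (us ! i)) None = G (P + i * m + m) - G (P + i * m)"
      using blk[OF that] count_window[of "P + i * m" "P + i * m + m" f None] G_def by simp
    moreover have "G (P + i * m) \<le> G (P + i * m + m)" unfolding G_def by (rule cnt_mono) simp
    ultimately show ?thesis using cnteq[OF that, of None] h_def by simp
  qed
  have Gi: "G (P + i * m) = G P + i * h" if "i \<le> e" for i
    using that
  proof (induction i)
    case 0 then show ?case by simp
  next
    case (Suc i)
    have e1: "P + Suc i * m = P + i * m + m" by simp
    have "G (P + i * m + m) = G (P + i * m) + h" using Gw[of i] Suc.prems by simp
    then show ?case unfolding e1 using Suc by simp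
  qed
  have "G (P + N * m) = G P + N * h" using Gi assms(4) by simp
  moreover have "G (P + N * m) = G P + m"
  proof -
    have "G (P + N * m) = (P + N * m + N - 1) div N" unfolding G_def f_def using cntG assms(1) by blast
    also have "\<dots> = (P + N - 1 + m * N) div N" using assms(1) by (simp add: algebra_simps)
    also have "\<dots> = m + (P + N - 1) div N" using assms(1) by (simp only: div_mult_self1 not_gr0 neq0_conv)
    also have "\<dots> = (P + N - 1) div N + m" by (rule add.commute)
    also have "(P + N - 1) div N = G P" unfolding G_def f_def using cntG[OF assms(1), of w P] by simp
    finally show ?thesis .
  qed
  ultimately have mN: "m = N * h" by simp
  define q where "q = h"
  have q0: "q > 0" using m0 mN q_def by simp
  have mdiv: "m div N = q" using mN q_def assms(1) by simp
  define a where "a = P div N"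
  define s where "s = P mod N"
  have sN: "s < N" using s_def assms(1) by simp
  have Pis: "P + i * m = (a + i * q) * N + s" for i
    using mN q_def a_def s_def by (simp add: algebra_simps)
  define W where "W = cnt w True"
  define T where "T = cnt f (Some True)"
  have Tf: "T ((a + i * q) * N + s) = (N - 1) * W (a + i * q) + (s - 1) * (if w (a + i * q) then 1 else 0)" for i
    unfolding T_def W_def f_def using cntT[OF assms(1)] sN by simp
  define A where "A i = int (W (a + Suc i * q)) - int (W (a + i * q))" for i
  define X where "X j = (if w (a + j * q) then 1 else 0 :: int)" for j
  define C where "C = int (count (mset (us ! 0)) (Some True))"
  have E: "\<forall>i<e. int (N - 1) * A i + int (s - 1) * (X (Suc i) - X i) = C"
  proof (intro allI impI)
    fix i assume ie: "i < e"
    have e1: "P + i * m + m = (a + Suc i * q) * N + s" using Pis[of "Suc i"] by simp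
    have "count (mset (us ! i)) (Some True) = T (P + i * m + m) - T (P + i * m)"
      using blk[OF ie] count_window[of "P + i * m" "P + i * m + m" f "Some True"] T_def by simp
    moreover have "T (P + i * m) \<le> T (P + i * m + m)" unfolding T_def by (rule cnt_mono) simp
    ultimately have "C = int (T (P + i * m + m)) - int (T (P + i * m))"
      using cnteq[OF ie, of "Some True"] C_def by simp
    also have "\<dots> = int (T ((a + Suc i * q) * N + s)) - int (T ((a + i * q) * N + s))"
    proof -
      have e1': "(a + i * q) * N + s + m = (a + Suc i * q) * N + s"
        using mN q_def by (simp add: algebra_simps)
      show ?thesis unfolding Pis[of i] e1' ..
    qed
    also have "\<dots> = int (N - 1) * A i + int (s - 1) * (X (Suc i) - X i)"
      unfolding Tf A_def X_def of_nat_add of_nat_mult by (simp add: right_diff_distrib)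
    finally show "int (N - 1) * A i + int (s - 1) * (X (Suc i) - X i) = C" ..
  qed
  have AX: "\<forall>j. X j = 0 \<or> X j = 1" unfolding X_def by simp
  have Aeq: "\<forall>i<e. A i = A 0" using intlem[OF assms(2) sN e2 AX E] .
  define vs where "vs = map (\<lambda>i. map w [a + i * q..<a + i * q + q]) [0..<e]"
  have cntv: "int (count (mset (vs ! i)) True) = A i" if "i < e" for i
  proof -
    have "count (mset (vs ! i)) True = W (a + i * q + q) - W (a + i * q)"
      unfolding vs_def W_def using that count_window[of "a + i * q" "a + i * q + q" w True] by simp
    moreover have "W (a + i * q) \<le> W (a + i * q + q)" unfolding W_def by (rule cnt_mono) simp
    ultimately show ?thesis unfolding A_def by (simp add: add.commute add.left_commute)
  qed
  have ap: "abelian_power vs e q"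
    unfolding abelian_power_def abelian_equiv_def
  proof (intro conjI ballI)
    show "0 < e" by fact
    show "length vs = e" unfolding vs_def by simp
  next
    fix u assume "u \<in> set vs" then show "u \<noteq> []" unfolding vs_def using q0 by auto
  next
    fix u v assume "u \<in> set vs" "v \<in> set vs"
    then obtain i j where ij: "i < e" "j < e" "u = vs ! i" "v = vs ! j"
      unfolding vs_def by (auto simp: in_set_conv_nth)
    show "mset u = mset v"
    proof (rule bool_mset)
      show "length u = length v" using ij unfolding vs_def by simp
      show "count (mset u) True = count (mset v) True"
      proof -
        have "A i = A 0" "A j = A 0" using Aeq ij(1,2) by blast+
        then have "int (count (mset (vs ! i)) True) = int (count (mset (vs ! j)) True)"
          using cntv[OF ij(1)] cntv[OF ij(2)] by linarith
        then show ?thesis using ij(3,4) by simp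
      qed
    qed
  next
    show "q = length (hd vs)" unfolding vs_def upt_conv_Cons[OF e0] by simp
  qed
  have oc: "occurs_in (concat vs) w"
    unfolding occurs_in_def vs_def concat_windows by (intro exI[of _ a]) simp
  have "N * (m div N) = m" using mdiv mN q_def by simp
  then show ?thesis using ap oc mdiv by blast
qed

end
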